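(* Let $\chi:\mathcal H\to\mathcal H_L^\chi\otimes\mathcal H_R^\chi$ be a splitting map and let $\{\pi_i\}_{i\in I}$ be the atomic projectors of $\mathcal Z(\mathrm{stloc}_L(\chi))$. Set $\mathcal H_i=\pi_i\mathcal H$ and $\chi_i=\chi\pi_i:\mathcal H\to\mathcal H_L^\chi\otimes\mathcal H_R^\chi$. Then: (1) $\mathcal H=\bigoplus_i\mathcal H_i$; (2) $\chi=\sum_i\chi_i=\sum_i(\chi_i)|_{\mathcal H_i}$; (3) for every $i$, $(\chi_i)|_{\mathcal H_i}$ is a splitting map on $\mathcal H_i$; (4) its algebra of strictly left-local operators, viewed as a subalgebra of $\mathcal L(\mathcal H)$, equals $\pi_i\,\mathrm{stloc}_L(\chi)$, and is thus a factor; (5) there exists a family $\{\mathcal H_L^i\}_{i\in I}$ of pairwise orthogonal subspaces of $\mathcal H_L^\chi$ such that $\mathrm{Im}(\chi_i)\subseteq\mathcal H_L^i\otimes\mathcal H_R^\chi$ for every $i$.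
   Context: All Hilbert spaces are finite-dimensional and complex. A splitting map on $\mathcal H$ is an isometry $\chi:\mathcal H\to\mathcal H_L^\chi\otimes\mathcal H_R^\chi$. $A\in\mathcal L(\mathcal H)$ is strictly left $\chi$-local if there is $\tilde A\in\mathcal L(\mathcal H_L^\chi)$ with $A\chi^\dagger=\chi^\dagger(\tilde A\otimes\mathbb 1)$ and $\chi A=(\tilde A\otimes\mathbb 1)\chi$; $\mathrm{stloc}_L(\chi)$ is the set of these, a Von Neumann algebra (unital $*$-subalgebra of $\mathcal L(\mathcal H)$). For a Von Neumann algebra $\mathcal C$, $\mathcal Z(\mathcal C)=\mathcal C\cap\mathcal C'$ is its centre; a commutative Von Neumann algebra $\mathcal Z$ has a unique family of nonzero, self-adjoint, pairwise orthogonal projectors ($\pi_i\pi_j=\delta_{ij}\pi_i$) spanning $\mathcal Z$, called its atomic projectors (they sum to the identity). A Von Neumann algebra is a factor if its centre consists of scalar multiples of its identity. Operators on $\mathcal H_i$ are viewed as operators on $\mathcal H$ by extending them by $0$ on $\mathcal H_i^\perp$. *)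

theory Defs
  imports Complex_Main "Jordan_Normal_Form.Matrix"
begin

text \<open>Finite-dimensional complex Hilbert spaces are modelled concretely:
  H = C^n, H_L = C^a, H_R = C^b, and H_L (x) H_R = C^(a*b), where the basis
  vector e_k (x) f_l of the tensor product has index k*b + l.\<close>

definition adj :: "complex mat \<Rightarrow> complex mat" where
  "adj A = mat (dim_col A) (dim_row A) (\<lambda>(i,j). cnj (A $$ (j,i)))"

definition kron :: "complex mat \<Rightarrow> complex mat \<Rightarrow> complex mat" where
  "kron A B = mat (dim_row A * dim_row B) (dim_col A * dim_col B)
     (\<lambda>(i,j). A $$ (i div dim_row B, j div dim_col B) * B $$ (i mod dim_row B, j mod dim_col B))"

definition msum :: "nat \<Rightarrow> nat \<Rightarrow> 'i set \<Rightarrow> ('i \<Rightarrow> complex mat) \<Rightarrow> complex mat" where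
  "msum r c F f = mat r c (\<lambda>(i,j). \<Sum>k\<in>F. f k $$ (i,j))"

definition mat_range :: "complex mat \<Rightarrow> complex vec set" where
  "mat_range M = {M *\<^sub>v v | v. v \<in> carrier_vec (dim_col M)}"

definition is_proj :: "nat \<Rightarrow> complex mat \<Rightarrow> bool" where
  "is_proj n P \<longleftrightarrow> P \<in> carrier_mat n n \<and> adj P = P \<and> P * P = P"

text \<open>A splitting map on the subspace H_P = P C^n (P an orthogonal projector on C^n)
  with target C^a (x) C^b, viewed (by the convention of extending by 0 on the
  orthogonal complement of H_P) as an (a*b) x n matrix X: X vanishes on the
  complement of H_P and is isometric on H_P.\<close>
definition splitting_on :: "nat \<Rightarrow> nat \<Rightarrow> nat \<Rightarrow> complex mat \<Rightarrow> complex mat \<Rightarrow> bool" where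
  "splitting_on n a b P X \<longleftrightarrow> is_proj n P \<and> X \<in> carrier_mat (a*b) n \<and> X * P = X \<and> adj X * X = P"

abbreviation splitting :: "nat \<Rightarrow> nat \<Rightarrow> nat \<Rightarrow> complex mat \<Rightarrow> bool" where
  "splitting n a b X \<equiv> splitting_on n a b (1\<^sub>m n) X"

text \<open>Strictly left X-local operators on H_P, viewed as operators on C^n
  (extended by 0 on the complement of H_P).\<close>
definition stloc_on :: "nat \<Rightarrow> nat \<Rightarrow> nat \<Rightarrow> complex mat \<Rightarrow> complex mat \<Rightarrow> complex mat set" where
  "stloc_on n a b P X = {A \<in> carrier_mat n n. P * A * P = A \<and>
     (\<exists>At \<in> carrier_mat a a. A * adj X = adj X * kron At (1\<^sub>m b) \<and> X * A = kron At (1\<^sub>m b) * X)}"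

abbreviation stloc :: "nat \<Rightarrow> nat \<Rightarrow> nat \<Rightarrow> complex mat \<Rightarrow> complex mat set" where
  "stloc n a b X \<equiv> stloc_on n a b (1\<^sub>m n) X"

definition centre :: "complex mat set \<Rightarrow> complex mat set" where
  "centre C = {A \<in> C. \<forall>B \<in> C. A * B = B * A}"

definition atomic_projectors :: "nat \<Rightarrow> complex mat set \<Rightarrow> 'i set \<Rightarrow> ('i \<Rightarrow> complex mat) \<Rightarrow> bool" where
  "atomic_projectors n Z I p \<longleftrightarrow> finite I \<and>
     (\<forall>i\<in>I. p i \<in> carrier_mat n n \<and> p i \<noteq> 0\<^sub>m n n \<and> adj (p i) = p i) \<and>
     (\<forall>i\<in>I. \<forall>j\<in>I. p i * p j = (if i = j then p i else 0\<^sub>m n n)) \<and>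
     Z = {msum n n I (\<lambda>i. c i \<cdot>\<^sub>m p i) | c. True}"

definition is_factor :: "complex mat \<Rightarrow> complex mat set \<Rightarrow> bool" where
  "is_factor P C \<longleftrightarrow> centre C = {c \<cdot>\<^sub>m P | c. True}"

end

theory Submission
  imports Defs
begin


lemma adj_carrier[simp]: "A \<in> carrier_mat r c \<Longrightarrow> adj A \<in> carrier_mat c r"
  by (auto simp: adj_def)
lemma adj_dim[simp]: "dim_row (adj A) = dim_col A" "dim_col (adj A) = dim_row A"
  by (auto simp: adj_def)
lemma adj_index[simp]: "i < dim_col A \<Longrightarrow> j < dim_row A \<Longrightarrow> adj A $$ (i,j) = cnj (A $$ (j,i))"
  by (auto simp: adj_def)
lemma adj_adj[simp]: "adj (adj A) = A"
  by (rule eq_matI) auto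
lemma adj_mult: assumes "A \<in> carrier_mat r k" "B \<in> carrier_mat k c"
  shows "adj (A * B) = adj B * adj A"
  using assms by (intro eq_matI) (auto simp: scalar_prod_def mult.commute)
lemma adj_one[simp]: "adj (1\<^sub>m n) = 1\<^sub>m n"
  by (rule eq_matI) auto
lemma adj_zero[simp]: "adj (0\<^sub>m r c) = 0\<^sub>m c r"
  by (rule eq_matI) auto
lemma adj_smult[simp]: "adj (x \<cdot>\<^sub>m A) = cnj x \<cdot>\<^sub>m adj A"
  by (rule eq_matI) auto

lemma kron_dim[simp]: "dim_row (kron A B) = dim_row A * dim_row B" "dim_col (kron A B) = dim_col A * dim_col B"
  by (auto simp: kron_def)
lemma kron_carrier[simp]: "A \<in> carrier_mat r c \<Longrightarrow> B \<in> carrier_mat r' c' \<Longrightarrow> kron A B \<in> carrier_mat (r*r') (c*c')"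
  by (auto simp: kron_def)

abbreviation K :: "nat \<Rightarrow> complex mat \<Rightarrow> complex mat" where "K b A \<equiv> kron A (1\<^sub>m b)"

lemma K_carrier[simp]: "A \<in> carrier_mat a a \<Longrightarrow> K b A \<in> carrier_mat (a*b) (a*b)"
  by simp

lemma K_index: assumes "A \<in> carrier_mat a a" "i < a*b" "j < a*b"
  shows "K b A $$ (i,j) = (if i mod b = j mod b then A $$ (i div b, j div b) else 0)"
proof -
  have "b > 0" using assms by (cases b) auto
  then show ?thesis using assms by (auto simp: kron_def)
qed


lemma sum_split_mult: "(\<Sum>s<a*b. f s) = (\<Sum>r<a. \<Sum>l<b. f (r*b+l::nat))" for f :: "nat \<Rightarrow> complex"
proof (induction a)
  case 0 then show ?case by simp
next
  case (Suc a)
  have e: "{..<Suc a*b} = {..<a*b} \<union> {a*b..<a*b+b}" by auto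
  have "(\<Sum>s<Suc a*b. f s) = (\<Sum>s<a*b. f s) + (\<Sum>s\<in>{a*b..<a*b+b}. f s)"
    unfolding e by (rule sum.union_disjoint) auto
  also have "(\<Sum>s\<in>{a*b..<a*b+b}. f s) = (\<Sum>l<b. f (a*b+l))"
  proof -
    have "{a*b..<a*b+b} = (\<lambda>l. a*b+l) ` {..<b}" proof (auto simp: image_iff)
      fix x assume "a*b \<le> x" "x < a*b+b"
      then show "\<exists>l\<in>{..<b}. x = a*b+l" by (intro bexI[of _ "x - a*b"]) auto
    qed
    then show ?thesis by (simp add: sum.reindex)
  qed
  finally show ?case using Suc by (simp add: mult.commute)
qed

lemma K_mult_index: assumes M: "M \<in> carrier_mat a a" and Y: "Y \<in> carrier_mat (a*b) m"
  and i: "i < a*b" and j: "j < m"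
  shows "(K b M * Y) $$ (i,j) = (\<Sum>r<a. M $$ (i div b, r) * Y $$ (r*b + i mod b, j))"
proof -
  have b: "b > 0" using i by (cases b) auto
  have "(K b M * Y) $$ (i,j) = (\<Sum>s<a*b. K b M $$ (i,s) * Y $$ (s,j))"
    using M Y i j by (simp add: scalar_prod_def lessThan_atLeast0)
  also have "\<dots> = (\<Sum>r<a. \<Sum>l<b. K b M $$ (i,r*b+l) * Y $$ (r*b+l,j))"
    by (rule sum_split_mult)
  also have "\<dots> = (\<Sum>r<a. \<Sum>l<b. (if l = i mod b then M $$ (i div b, r) * Y $$ (r*b + i mod b, j) else 0))"
  proof (rule sum.cong[OF refl], rule sum.cong[OF refl])
    fix r l assume r: "r \<in> {..<a}" and l: "l \<in> {..<b}"
    have rl: "r*b+l < a*b"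
    proof -
      have "r*b+l < r*b+b" using l by simp
      also have "\<dots> = (r+1)*b" by simp
      also have "\<dots> \<le> a*b" using r by (intro mult_right_mono) auto
      finally show ?thesis .
    qed
    have "(r*b+l) mod b = l" "(r*b+l) div b = r" using l b by auto
    then show "K b M $$ (i,r*b+l) * Y $$ (r*b+l,j) = (if l = i mod b then M $$ (i div b, r) * Y $$ (r*b + i mod b, j) else 0)"
      using K_index[OF M i rl] by auto
  qed
  also have "\<dots> = (\<Sum>r<a. M $$ (i div b, r) * Y $$ (r*b + i mod b, j))"
    using b by (simp add: sum.delta')
  finally show ?thesis .
qed

lemma K_mult: assumes A: "A \<in> carrier_mat a a" and B: "B \<in> carrier_mat a a"
  shows "K b (A * B) = K b A * K b B"
proof (rule eq_matI)
  fix i j assume i: "i < dim_row (K b A * K b B)" and j: "j < dim_col (K b A * K b B)"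
  then have i: "i < a*b" and j: "j < a*b" using A B by auto
  have b: "b > 0" using i by (cases b) auto
  have ri: "\<And>r. r < a \<Longrightarrow> r*b + i mod b < a*b"
  proof -
    fix r assume r: "r < a"
    have "r*b + i mod b < r*b+b" using b by simp
    also have "\<dots> = (r+1)*b" by simp
    also have "\<dots> \<le> a*b" using r by (intro mult_right_mono) auto
    finally show "r*b + i mod b < a*b" .
  qed
  have "(K b A * K b B) $$ (i,j) = (\<Sum>r<a. A $$ (i div b, r) * K b B $$ (r*b + i mod b, j))"
    using K_mult_index[OF A _ i j, of "K b B"] B by simp
  also have "\<dots> = (\<Sum>r<a. A $$ (i div b, r) * (if i mod b = j mod b then B $$ (r, j div b) else 0))"
    by (rule sum.cong[OF refl]) (use K_index[OF B ri j] b in auto)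
  also have "\<dots> = K b (A*B) $$ (i,j)"
    using K_index[of "A*B" a i b j] A B i j by (auto simp: scalar_prod_def lessThan_atLeast0 less_mult_imp_div_less)
  finally show "K b (A * B) $$ (i, j) = (K b A * K b B) $$ (i,j)" by simp
qed (use A B in auto)

lemma K_one: "K b (1\<^sub>m a) = 1\<^sub>m (a*b)"
proof (rule eq_matI)
  fix i j assume "i < dim_row (1\<^sub>m (a*b) :: complex mat)" "j < dim_col (1\<^sub>m (a*b) :: complex mat)"
  then have i: "i < a*b" and j: "j < a*b" by auto
  have b: "b > 0" using i by (cases b) auto
  have "i = j \<longleftrightarrow> i div b = j div b \<and> i mod b = j mod b"
    by (metis div_mult_mod_eq)
  then show "K b (1\<^sub>m a) $$ (i,j) = 1\<^sub>m (a*b) $$ (i,j)"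
    using K_index[of "1\<^sub>m a" a i b j] i j by (auto simp: less_mult_imp_div_less)
qed auto

lemma K_adj: assumes A: "A \<in> carrier_mat a a" shows "adj (K b A) = K b (adj A)"
proof (rule eq_matI)
  fix i j assume "i < dim_row (K b (adj A))" "j < dim_col (K b (adj A))"
  then have i: "i < a*b" and j: "j < a*b" using A by auto
  show "adj (K b A) $$ (i,j) = K b (adj A) $$ (i,j)"
    using K_index[OF A j i] K_index[of "adj A" a i b j] A i j by (auto simp: less_mult_imp_div_less)
qed (use A in auto)

lemma K_smult: assumes A: "A \<in> carrier_mat a a" shows "K b (c \<cdot>\<^sub>m A) = c \<cdot>\<^sub>m K b A"
proof (rule eq_matI)
  fix i j assume "i < dim_row (c \<cdot>\<^sub>m K b A)" "j < dim_col (c \<cdot>\<^sub>m K b A)"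
  then have i: "i < a*b" and j: "j < a*b" using A by auto
  show "K b (c \<cdot>\<^sub>m A) $$ (i,j) = (c \<cdot>\<^sub>m K b A) $$ (i,j)"
    using K_index[OF A i j] K_index[of "c \<cdot>\<^sub>m A" a i b j] A i j by (auto simp: less_mult_imp_div_less)
qed (use A in auto)

lemma msum_carrier[simp]: "msum r c F f \<in> carrier_mat r c"
  by (auto simp: msum_def)
lemma msum_dim[simp]: "dim_row (msum r c F f) = r" "dim_col (msum r c F f) = c"
  by (auto simp: msum_def)
lemma msum_index[simp]: "i < r \<Longrightarrow> j < c \<Longrightarrow> msum r c F f $$ (i,j) = (\<Sum>k\<in>F. f k $$ (i,j))"
  by (auto simp: msum_def)
lemma msum_cong: "(\<And>k. k \<in> F \<Longrightarrow> f k = g k) \<Longrightarrow> msum r c F f = msum r c F g"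
  by (auto simp: msum_def)

lemma msum_mult_left: assumes A: "A \<in> carrier_mat r' r" and f: "\<And>k. k \<in> F \<Longrightarrow> f k \<in> carrier_mat r c"
  shows "A * msum r c F f = msum r' c F (\<lambda>k. A * f k)"
proof (rule eq_matI)
  fix i j assume "i < dim_row (msum r' c F (\<lambda>k. A * f k))" "j < dim_col (msum r' c F (\<lambda>k. A * f k))"
  then have i: "i < r'" and j: "j < c" by auto
  have "(A * msum r c F f) $$ (i,j) = (\<Sum>l<r. A $$ (i,l) * (\<Sum>k\<in>F. f k $$ (l,j)))"
    using A i j by (simp add: scalar_prod_def lessThan_atLeast0)
  also have "\<dots> = (\<Sum>k\<in>F. \<Sum>l<r. A $$ (i,l) * f k $$ (l,j))"
    by (simp add: sum_distrib_left sum.swap[of _ F])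
  also have "\<dots> = (\<Sum>k\<in>F. (A * f k) $$ (i,j))"
  proof (rule sum.cong[OF refl])
    fix k assume "k \<in> F" then have "f k \<in> carrier_mat r c" by (rule f)
    then show "(\<Sum>l<r. A $$ (i,l) * f k $$ (l,j)) = (A * f k) $$ (i,j)"
      using A i j by (auto simp: scalar_prod_def lessThan_atLeast0)
  qed
  finally show "(A * msum r c F f) $$ (i,j) = msum r' c F (\<lambda>k. A * f k) $$ (i,j)" using i j by simp
qed (use A in auto)

lemma msum_mult_right: assumes A: "A \<in> carrier_mat c c'" and f: "\<And>k. k \<in> F \<Longrightarrow> f k \<in> carrier_mat r c"
  shows "msum r c F f * A = msum r c' F (\<lambda>k. f k * A)"
proof (rule eq_matI)
  fix i j assume "i < dim_row (msum r c' F (\<lambda>k. f k * A))" "j < dim_col (msum r c' F (\<lambda>k. f k * A))"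
  then have i: "i < r" and j: "j < c'" by auto
  have "(msum r c F f * A) $$ (i,j) = (\<Sum>l<c. (\<Sum>k\<in>F. f k $$ (i,l)) * A $$ (l,j))"
    using A i j by (simp add: scalar_prod_def lessThan_atLeast0)
  also have "\<dots> = (\<Sum>k\<in>F. \<Sum>l<c. f k $$ (i,l) * A $$ (l,j))"
    by (simp add: sum_distrib_right sum.swap[of _ F])
  also have "\<dots> = (\<Sum>k\<in>F. (f k * A) $$ (i,j))"
  proof (rule sum.cong[OF refl])
    fix k assume "k \<in> F" then have "f k \<in> carrier_mat r c" by (rule f)
    then show "(\<Sum>l<c. f k $$ (i,l) * A $$ (l,j)) = (f k * A) $$ (i,j)"
      using A i j by (auto simp: scalar_prod_def lessThan_atLeast0)
  qed
  finally show "(msum r c F f * A) $$ (i,j) = msum r c' F (\<lambda>k. f k * A) $$ (i,j)" using i j by simp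
qed (use A in auto)

lemma msum_single: assumes F: "finite F" "i \<in> F" and fi: "f i \<in> carrier_mat r c"
  and z: "\<And>j. j \<in> F \<Longrightarrow> j \<noteq> i \<Longrightarrow> f j = 0\<^sub>m r c"
  shows "msum r c F f = f i"
proof (rule eq_matI)
  fix x y assume "x < dim_row (f i)" "y < dim_col (f i)"
  then have x: "x < r" and y: "y < c" using fi by auto
  have "(\<Sum>k\<in>F. f k $$ (x,y)) = f i $$ (x,y)"
    by (subst sum.remove[OF F]) (use z x y in \<open>auto intro!: sum.neutral\<close>)
  then show "msum r c F f $$ (x,y) = f i $$ (x,y)" using x y by simp
qed (use fi in auto)


definition ip :: "complex vec \<Rightarrow> complex vec \<Rightarrow> complex" where
  "ip u y = (\<Sum>i<dim_vec u. cnj (u$i) * y$i)"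
definition outer :: "complex vec \<Rightarrow> complex mat" where
  "outer r = mat (dim_vec r) (dim_vec r) (\<lambda>(i,j). r$i * cnj (r$j))"

lemma outer_dim[simp]: "dim_row (outer r) = dim_vec r" "dim_col (outer r) = dim_vec r"
  by (auto simp: outer_def)
lemma outer_carrier[simp]: "r \<in> carrier_vec a \<Longrightarrow> outer r \<in> carrier_mat a a"
  by (auto simp: outer_def)

lemma ip_add_right: "x \<in> carrier_vec a \<Longrightarrow> y \<in> carrier_vec a \<Longrightarrow> z \<in> carrier_vec a \<Longrightarrow> ip x (y + z) = ip x y + ip x z"
  by (auto simp: ip_def algebra_simps sum.distrib)
lemma ip_minus_right: "x \<in> carrier_vec a \<Longrightarrow> y \<in> carrier_vec a \<Longrightarrow> z \<in> carrier_vec a \<Longrightarrow> ip x (y - z) = ip x y - ip x z"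
  by (auto simp: ip_def algebra_simps sum_subtractf)
lemma ip_minus_left: "x \<in> carrier_vec a \<Longrightarrow> y \<in> carrier_vec a \<Longrightarrow> z \<in> carrier_vec a \<Longrightarrow> ip (x - y) z = ip x z - ip y z"
  by (auto simp: ip_def algebra_simps sum_subtractf)
lemma ip_smult_right: "x \<in> carrier_vec a \<Longrightarrow> y \<in> carrier_vec a \<Longrightarrow> ip x (c \<cdot>\<^sub>v y) = c * ip x y"
  by (auto simp: ip_def algebra_simps sum_distrib_left)
lemma ip_sym: "x \<in> carrier_vec a \<Longrightarrow> y \<in> carrier_vec a \<Longrightarrow> ip y x = cnj (ip x y)"
  by (auto simp: ip_def mult.commute)
lemma ip_zero_right: "x \<in> carrier_vec a \<Longrightarrow> ip x (0\<^sub>v a) = 0"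
  by (auto simp: ip_def)
lemma ip_self_real: "cnj (ip x x) = ip x x"
  by (auto simp: ip_def mult.commute)
lemma ip_self_zero: assumes "x \<in> carrier_vec a" "ip x x = 0" shows "x = 0\<^sub>v a"
proof -
  have "ip x x = (\<Sum>i<a. complex_of_real ((cmod (x$i))^2))"
    using assms unfolding ip_def
    by (intro sum.cong) (auto simp: mult.commute simp del: of_real_power intro: complex_norm_square[symmetric])
  then have "complex_of_real (\<Sum>i<a. (cmod (x$i))^2) = 0" using assms(2) by (simp only: of_real_sum)
  then have "(\<Sum>i<a. (cmod (x$i))^2) = 0" by (simp only: of_real_eq_0_iff)
  then have "\<forall>i\<in>{..<a}. (cmod (x$i))^2 = 0"
    by (subst (asm) sum_nonneg_eq_0_iff) auto
  then show ?thesis using assms by (auto intro!: eq_vecI)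
qed

lemma ip_adj: assumes A: "A \<in> carrier_mat r c" and x: "x \<in> carrier_vec c" and y: "y \<in> carrier_vec r"
  shows "ip (A *\<^sub>v x) y = ip x (adj A *\<^sub>v y)"
proof -
  have "ip (A *\<^sub>v x) y = (\<Sum>i<r. cnj (\<Sum>k<c. A $$ (i,k) * x$k) * y$i)"
    using A x y by (simp add: ip_def scalar_prod_def lessThan_atLeast0)
  also have "\<dots> = (\<Sum>k<c. cnj (x$k) * (\<Sum>i<r. cnj (A $$ (i,k)) * y$i))"
    by (simp add: sum_distrib_left sum_distrib_right sum.swap[of _ "{..<c}"] algebra_simps)
  also have "\<dots> = ip x (adj A *\<^sub>v y)"
    using A x y by (simp add: ip_def scalar_prod_def lessThan_atLeast0)
  finally show ?thesis .
qed

lemma outer_mult_vec: assumes r: "r \<in> carrier_vec a" and x: "x \<in> carrier_vec a"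
  shows "outer r *\<^sub>v x = ip r x \<cdot>\<^sub>v r"
  using r x by (intro eq_vecI) (auto simp: outer_def ip_def scalar_prod_def lessThan_atLeast0 sum_distrib_left algebra_simps)

lemma outer_adj: assumes r: "r \<in> carrier_vec a" shows "adj (outer r) = outer r"
  using r by (intro eq_matI) (auto simp: outer_def)

lemma mult_outer_zero: assumes Q: "Q \<in> carrier_mat a a" and r: "r \<in> carrier_vec a" and Qr: "Q *\<^sub>v r = 0\<^sub>v a"
  shows "Q * outer r = 0\<^sub>m a a"
proof (rule eq_matI)
  fix i j assume "i < dim_row (0\<^sub>m a a :: complex mat)" "j < dim_col (0\<^sub>m a a :: complex mat)"
  then have i: "i < a" and j: "j < a" by auto
  have "(Q * outer r) $$ (i,j) = (Q *\<^sub>v r) $ i * cnj (r$j)"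
    using Q r i j by (simp add: outer_def scalar_prod_def lessThan_atLeast0 sum_distrib_right sum_distrib_left algebra_simps)
  then show "(Q * outer r) $$ (i,j) = 0\<^sub>m a a $$ (i,j)" using Qr i j by simp
qed (use Q r in auto)

lemma outer_mult_zero: assumes Q: "Q \<in> carrier_mat a a" and r: "r \<in> carrier_vec a" and Qr: "adj Q *\<^sub>v r = 0\<^sub>v a"
  shows "outer r * Q = 0\<^sub>m a a"
proof -
  have "outer r * Q = adj (adj Q * outer r)"
    using Q r by (simp add: adj_mult[of "adj Q" a a "outer r" a] outer_adj)
  also have "adj Q * outer r = 0\<^sub>m a a" using Q r Qr by (intro mult_outer_zero) auto
  finally show ?thesis by simp
qed

lemma outer_outer: assumes r: "r \<in> carrier_vec a" shows "outer r * outer r = ip r r \<cdot>\<^sub>m outer r"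
  using r by (intro eq_matI) (auto simp: outer_def ip_def scalar_prod_def lessThan_atLeast0 sum_distrib_left sum_distrib_right algebra_simps)



lemma adj_add: "A \<in> carrier_mat r c \<Longrightarrow> B \<in> carrier_mat r c \<Longrightarrow> adj (A + B) = adj A + adj B"
  by (intro eq_matI) auto

lemma smult_mat_mult_vec: "A \<in> carrier_mat r c \<Longrightarrow> v \<in> carrier_vec c \<Longrightarrow> (k \<cdot>\<^sub>m A) *\<^sub>v v = k \<cdot>\<^sub>v (A *\<^sub>v v)"
  for k :: complex
  by (intro eq_vecI) (auto simp: scalar_prod_def sum_distrib_left algebra_simps)

lemma proj_exists: "set us \<subseteq> carrier_vec a \<Longrightarrow> \<exists>Q \<in> carrier_mat a a. adj Q = Q \<and> Q * Q = Q \<and>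
   (\<forall>u\<in>set us. Q *\<^sub>v u = u) \<and> (\<forall>y\<in>carrier_vec a. (\<forall>u\<in>set us. ip u y = 0) \<longrightarrow> Q *\<^sub>v y = 0\<^sub>v a)"
proof (induction us)
  case Nil
  show ?case by (intro bexI[of _ "0\<^sub>m a a"]) auto
next
  case (Cons u us)
  then have u: "u \<in> carrier_vec a" and us: "set us \<subseteq> carrier_vec a" by auto
  from Cons.IH[OF us] obtain Q where Q: "Q \<in> carrier_mat a a" and QH: "adj Q = Q" and QQ: "Q * Q = Q"
    and Qus: "\<forall>u\<in>set us. Q *\<^sub>v u = u" and Qy: "\<forall>y\<in>carrier_vec a. (\<forall>u\<in>set us. ip u y = 0) \<longrightarrow> Q *\<^sub>v y = 0\<^sub>v a"
    by blast
  define r where "r = u - Q *\<^sub>v u"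
  have r: "r \<in> carrier_vec a" using u Q by (simp add: r_def)
  have Qu: "Q *\<^sub>v u \<in> carrier_vec a" using u Q by simp
  have Qr: "Q *\<^sub>v r = 0\<^sub>v a"
  proof -
    have "Q *\<^sub>v r = Q *\<^sub>v u - Q *\<^sub>v (Q *\<^sub>v u)" unfolding r_def using Q u by (simp add: mult_minus_distrib_mat_vec)
    also have "Q *\<^sub>v (Q *\<^sub>v u) = Q *\<^sub>v u" using Q u QQ by (metis assoc_mult_mat_vec)
    finally show ?thesis using Q u by simp
  qed
  have ipr: "ip v r = 0" if v: "v \<in> set us" for v
  proof -
    have vc: "v \<in> carrier_vec a" using v us by auto
    have "ip v r = ip v u - ip v (Q *\<^sub>v u)" unfolding r_def using vc u Qu by (rule ip_minus_right)
    also have "ip v (Q *\<^sub>v u) = ip (Q *\<^sub>v v) u" using ip_adj[OF Q vc u] QH by simp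
    also have "Q *\<^sub>v v = v" using Qus v by auto
    finally show ?thesis by simp
  qed
  have ipry: "ip r y = 0" if y: "y \<in> carrier_vec a" "ip u y = 0" "Q *\<^sub>v y = 0\<^sub>v a" for y
  proof -
    have "ip r y = ip u y - ip (Q *\<^sub>v u) y" unfolding r_def by (rule ip_minus_left[OF u Qu y(1)])
    also have "ip (Q *\<^sub>v u) y = ip u (Q *\<^sub>v y)" using ip_adj[OF Q u y(1)] QH by simp
    finally show ?thesis using y u by (simp add: ip_zero_right)
  qed
  show ?case
  proof (cases "r = 0\<^sub>v a")
    case True
    have Quu: "Q *\<^sub>v u = u"
    proof (rule eq_vecI)
      fix i assume "i < dim_vec u"
      then have "r $ i = 0" "i < a" using True u by auto
      then show "(Q *\<^sub>v u) $ i = u $ i" using u Q by (simp add: r_def)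
    qed (use u Q in auto)
    show ?thesis using Q QH QQ Qus Qy Quu by (intro bexI[of _ Q]) auto
  next
    case False
    define c where "c = ip r r"
    have c0: "c \<noteq> 0" using ip_self_zero[OF r] False by (auto simp: c_def)
    have cr: "cnj c = c" by (simp add: c_def ip_self_real)
    define Q' where "Q' = Q + (1/c) \<cdot>\<^sub>m outer r"
    have O: "outer r \<in> carrier_mat a a" using r by simp
    have Q': "Q' \<in> carrier_mat a a" using Q O by (simp add: Q'_def)
    have "adj Q' = Q'"
      unfolding Q'_def using Q O QH outer_adj[OF r] cr
      by (simp add: adj_add[of _ a a])
    moreover have "Q' * Q' = Q'"
    proof -
      have QO: "Q * outer r = 0\<^sub>m a a" by (rule mult_outer_zero[OF Q r Qr])
      have OQ: "outer r * Q = 0\<^sub>m a a" by (rule outer_mult_zero[OF Q r]) (use QH Qr in simp)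
      have OO: "outer r * outer r = c \<cdot>\<^sub>m outer r" unfolding c_def by (rule outer_outer[OF r])
      define s where "s = 1/c"
      have sO: "s \<cdot>\<^sub>m outer r \<in> carrier_mat a a" using O by simp
      have "Q' * Q' = Q * (Q + s \<cdot>\<^sub>m outer r) + (s \<cdot>\<^sub>m outer r) * (Q + s \<cdot>\<^sub>m outer r)"
        unfolding Q'_def s_def[symmetric] using Q sO by (intro add_mult_distrib_mat[of Q a a "s \<cdot>\<^sub>m outer r" "Q + s \<cdot>\<^sub>m outer r" a]) auto
      also have "Q * (Q + s \<cdot>\<^sub>m outer r) = Q * Q + Q * (s \<cdot>\<^sub>m outer r)"
        using Q Q sO by (rule mult_add_distrib_mat)
      also have "Q * (s \<cdot>\<^sub>m outer r) = s \<cdot>\<^sub>m (Q * outer r)" using Q O by (rule mult_smult_distrib)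
      also have "(s \<cdot>\<^sub>m outer r) * (Q + s \<cdot>\<^sub>m outer r) = (s \<cdot>\<^sub>m outer r) * Q + (s \<cdot>\<^sub>m outer r) * (s \<cdot>\<^sub>m outer r)"
        using sO Q sO by (rule mult_add_distrib_mat)
      also have "(s \<cdot>\<^sub>m outer r) * Q = s \<cdot>\<^sub>m (outer r * Q)" using O Q by (rule mult_smult_assoc_mat)
      also have "(s \<cdot>\<^sub>m outer r) * (s \<cdot>\<^sub>m outer r) = s \<cdot>\<^sub>m (outer r * (s \<cdot>\<^sub>m outer r))" using O sO by (rule mult_smult_assoc_mat)
      also have "outer r * (s \<cdot>\<^sub>m outer r) = s \<cdot>\<^sub>m (outer r * outer r)" using O O by (rule mult_smult_distrib)
      also have "s \<cdot>\<^sub>m (s \<cdot>\<^sub>m (outer r * outer r)) = s \<cdot>\<^sub>m outer r"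
        unfolding OO using c0 O by (intro eq_matI) (auto simp: s_def)
      finally have "Q' * Q' = Q + s \<cdot>\<^sub>m outer r" using QO OQ QQ Q O by simp
      then show ?thesis unfolding Q'_def s_def .
    qed
    moreover have "\<forall>v\<in>set (u # us). Q' *\<^sub>v v = v"
    proof
      fix v assume v: "v \<in> set (u # us)"
      then have vc: "v \<in> carrier_vec a" using u us by auto
      have eq: "Q' *\<^sub>v v = Q *\<^sub>v v + ((1/c) * ip r v) \<cdot>\<^sub>v r"
        unfolding Q'_def using Q O vc r by (simp add: add_mult_distrib_mat_vec outer_mult_vec smult_smult_assoc smult_mat_mult_vec[of _ a a])
      show "Q' *\<^sub>v v = v"
      proof (cases "v = u")
        case True
        have "ip r (Q *\<^sub>v u) = ip (Q *\<^sub>v r) u" using ip_adj[OF Q r u] QH by simp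
        then have z: "ip r (Q *\<^sub>v u) = 0" using Qr u by (simp add: ip_def)
        have "c = ip r u - ip r (Q *\<^sub>v u)" unfolding c_def by (subst (2) r_def) (rule ip_minus_right[OF r u Qu])
        then have "ip r u = c" using z by simp
        then have "Q' *\<^sub>v v = Q *\<^sub>v u + r" using eq True c0 by simp
        then show ?thesis using True u Q by (intro eq_vecI) (auto simp: r_def)
      next
        case False
        then have v': "v \<in> set us" using v by auto
        have "ip r v = cnj (ip v r)" using ip_sym[OF vc r] .
        then have "ip r v = 0" using ipr[OF v'] by simp
        then show ?thesis using eq Qus v' vc Q r by (auto intro!: eq_vecI)
      qed
    qed
    moreover have "\<forall>y\<in>carrier_vec a. (\<forall>v\<in>set (u # us). ip v y = 0) \<longrightarrow> Q' *\<^sub>v y = 0\<^sub>v a"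
    proof (intro ballI impI)
      fix y assume y: "y \<in> carrier_vec a" and h: "\<forall>v\<in>set (u # us). ip v y = 0"
      have Qy0: "Q *\<^sub>v y = 0\<^sub>v a" using Qy y h by auto
      have "ip r y = 0" using ipry[OF y _ Qy0] h by auto
      then show "Q' *\<^sub>v y = 0\<^sub>v a"
        unfolding Q'_def using Q O y r Qy0 apply (simp add: add_mult_distrib_mat_vec outer_mult_vec smult_mat_mult_vec[of _ a a])
        by (rule eq_vecI) auto
    qed
    ultimately show ?thesis using Q' by blast
  qed
qed


lemma proj_mat_exists: assumes G: "G \<in> carrier_mat a m"
  shows "\<exists>Q \<in> carrier_mat a a. adj Q = Q \<and> Q * Q = Q \<and> Q * G = G \<and>
    (\<forall>k. \<forall>Z \<in> carrier_mat a k. adj G * Z = 0\<^sub>m m k \<longrightarrow> Q * Z = 0\<^sub>m a k)"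
proof -
  have "set (cols G) \<subseteq> carrier_vec a" using G cols_dim[of G] by auto
  from proj_exists[OF this] obtain Q where Q: "Q \<in> carrier_mat a a" and QH: "adj Q = Q" and QQ: "Q * Q = Q"
    and Qc: "\<forall>u\<in>set (cols G). Q *\<^sub>v u = u"
    and Qy: "\<forall>y\<in>carrier_vec a. (\<forall>u\<in>set (cols G). ip u y = 0) \<longrightarrow> Q *\<^sub>v y = 0\<^sub>v a" by blast
  have colG: "col G j \<in> set (cols G)" if "j < m" for j
    using that G by (metis cols_length cols_nth carrier_matD(2) nth_mem)
  have "Q * G = G"
  proof (rule mat_col_eqI)
    fix j assume "j < dim_col G"
    then have j: "j < m" using G by auto
    show "col (Q * G) j = col G j" using col_mult2[OF Q G j] Qc colG[OF j] by simp
  qed (use Q G in auto)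
  moreover have "\<forall>k. \<forall>Z \<in> carrier_mat a k. adj G * Z = 0\<^sub>m m k \<longrightarrow> Q * Z = 0\<^sub>m a k"
  proof (intro allI ballI impI)
  fix k Z assume Z: "Z \<in> carrier_mat a k" and GZ: "adj G * Z = 0\<^sub>m m k"
  show "Q * Z = 0\<^sub>m a k"
  proof (rule mat_col_eqI)
    fix l assume "l < dim_col (0\<^sub>m a k :: complex mat)"
    then have l: "l < k" by auto
    have "Q *\<^sub>v col Z l = 0\<^sub>v a"
    proof (rule Qy[rule_format])
      show "col Z l \<in> carrier_vec a" using Z by auto
      fix u assume "u \<in> set (cols G)"
      then obtain j where j: "j < m" and u: "u = col G j" using G
        by (metis cols_length cols_nth carrier_matD(2) in_set_conv_nth)
      have "(adj G * Z) $$ (j, l) = ip u (col Z l)"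
        using G Z j l by (simp add: u ip_def scalar_prod_def lessThan_atLeast0)
      then show "ip u (col Z l) = 0" using GZ j l by simp
    qed
    then show "col (Q * Z) l = col (0\<^sub>m a k) l" using col_mult2[OF Q Z l] l by simp
  qed (use Q Z in auto)
  qed
  ultimately show ?thesis using Q QH QQ by blast
qed


definition rs :: "nat \<Rightarrow> nat \<Rightarrow> complex mat \<Rightarrow> complex mat" where
  "rs a b Y = mat a (dim_col Y * b) (\<lambda>(r,c). Y $$ (r*b + c mod b, c div b))"

lemma rs_carrier[simp]: "Y \<in> carrier_mat x n \<Longrightarrow> rs a b Y \<in> carrier_mat a (n*b)"
  by (auto simp: rs_def)

lemma rs_dim[simp]: "dim_row (rs a b Y) = a" "dim_col (rs a b Y) = dim_col Y * b"
  by (auto simp: rs_def)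

lemma lt_mult_aux: "r < a \<Longrightarrow> l < (b::nat) \<Longrightarrow> r*b + l < a*b"
proof -
  assume r: "r < a" and l: "l < b"
  have "r*b + l < r*b+b" using l by simp
  also have "\<dots> = (r+1)*b" by simp
  also have "\<dots> \<le> a*b" using r by (intro mult_right_mono) auto
  finally show ?thesis .
qed

lemma rs_K: assumes M: "M \<in> carrier_mat a a" and Y: "Y \<in> carrier_mat (a*b) n"
  shows "rs a b (K b M * Y) = M * rs a b Y"
proof (rule eq_matI)
  fix r c assume "r < dim_row (M * rs a b Y)" "c < dim_col (M * rs a b Y)"
  then have r: "r < a" and c: "c < n*b" using M Y by auto
  have b: "b > 0" using c by (cases b) auto
  have cb: "c div b < n" using c b by (simp add: less_mult_imp_div_less)
  have rb: "r*b + c mod b < a*b" using r b by (intro lt_mult_aux) auto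
  have e1: "(r*b + c mod b) div b = r" "(r*b + c mod b) mod b = c mod b" using b by auto
  have "rs a b (K b M * Y) $$ (r,c) = (K b M * Y) $$ (r*b + c mod b, c div b)"
    using r c M Y by (simp add: rs_def)
  also have "\<dots> = (\<Sum>r'<a. M $$ (r, r') * Y $$ (r'*b + c mod b, c div b))"
    using K_mult_index[OF M Y rb cb] e1 by simp
  also have "\<dots> = (M * rs a b Y) $$ (r,c)"
    using r c M Y by (simp add: rs_def scalar_prod_def lessThan_atLeast0)
  finally show "rs a b (K b M * Y) $$ (r,c) = (M * rs a b Y) $$ (r,c)" .
qed (use M Y in \<open>auto simp: rs_def\<close>)

lemma rs_inj: assumes Y: "Y \<in> carrier_mat (a*b) n" and Y': "Y' \<in> carrier_mat (a*b) n"
  and e: "rs a b Y = rs a b Y'" shows "Y = Y'"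
proof (rule eq_matI)
  fix s k assume "s < dim_row Y'" "k < dim_col Y'"
  then have s: "s < a*b" and k: "k < n" using Y' by auto
  have b: "b > 0" using s by (cases b) auto
  define c where "c = k*b + s mod b"
  have c: "c < n*b" unfolding c_def using k b by (intro lt_mult_aux) auto
  have r: "s div b < a" using s b by (simp add: less_mult_imp_div_less)
  have cm: "c mod b = s mod b" "c div b = k" using b by (auto simp: c_def)
  have "rs a b Y $$ (s div b, c) = rs a b Y' $$ (s div b, c)" using e by simp
  then show "Y $$ (s,k) = Y' $$ (s,k)" using r c Y Y' cm by (simp add: rs_def mult.commute)
qed (use Y Y' in auto)

lemma rs_zero: "rs a b (0\<^sub>m (a*b) n) = 0\<^sub>m a (n*b)"
proof (rule eq_matI)
  fix r c assume "r < dim_row (0\<^sub>m a (n*b) :: complex mat)" "c < dim_col (0\<^sub>m a (n*b) :: complex mat)"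
  then have r: "r < a" and c: "c < n*b" by auto
  have b: "b > 0" using c by (cases b) auto
  have "c div b < n" using c b by (simp add: less_mult_imp_div_less)
  moreover have "r*b + c mod b < a*b" using r b by (intro lt_mult_aux) auto
  ultimately show "rs a b (0\<^sub>m (a*b) n) $$ (r,c) = 0\<^sub>m a (n*b) $$ (r,c)" using r c by (simp add: rs_def)
qed (auto simp: rs_def)

lemma massoc: "dim_col A = dim_row B \<Longrightarrow> dim_col B = dim_row C \<Longrightarrow> (A*B)*C = A*(B*C)" for A B C :: "'a::comm_ring_1 mat"
  by (rule assoc_mult_mat[of A "dim_row A" "dim_col A" B "dim_col B" C "dim_col C"]) auto

lemma E_sub:
  assumes X: "chi \<in> carrier_mat (a*b) n" and P: "P \<in> carrier_mat n n" and PH: "adj P = P" and PP: "P * P = P"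
    and T: "T \<in> carrier_mat a a" and hT1: "P * adj chi = adj chi * K b T" and hT2: "chi * P = K b T * chi"
    and A: "A \<in> stloc_on n a b P (chi * P)"
  shows "A \<in> stloc n a b chi \<and> P * A = A \<and> A * P = A"
proof -
  from A obtain At where Ac: "A \<in> carrier_mat n n" and hA: "P * A * P = A" and At: "At \<in> carrier_mat a a"
    and h1: "A * adj (chi * P) = adj (chi * P) * K b At" and h2: "chi * P * A = K b At * (chi * P)"
    unfolding stloc_on_def by blast
  have d: "dim_row chi = a*b" "dim_col chi = n" "dim_row P = n" "dim_col P = n" "dim_row T = a" "dim_col T = a"
    "dim_row A = n" "dim_col A = n" "dim_row At = a" "dim_col At = a" using X P T Ac At by auto
  have aY: "adj (chi * P) = P * adj chi" using adj_mult[OF X P] PH by simp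
  have h1': "A * (P * adj chi) = (P * adj chi) * K b At" using h1 unfolding aY .
  have AP: "A * P = A"
  proof -
    have "A * P = (P * A * P) * P" using hA by simp
    also have "\<dots> = P * A * (P * P)" by (simp add: massoc d)
    also have "\<dots> = A" using PP hA by simp
    finally show ?thesis .
  qed
  have PA: "P * A = A"
  proof -
    have "P * A = P * (P * A * P)" using hA by simp
    also have "\<dots> = (P * P) * A * P" by (simp add: massoc d)
    also have "\<dots> = A" using PP hA by simp
    finally show ?thesis .
  qed
  have KT: "K b (T * At * T) = K b T * K b At * K b T"
    using K_mult[OF T At] K_mult[OF mult_carrier_mat[OF T At] T] by simp
  have g1: "A * adj chi = adj chi * K b (T * At * T)"
  proof -
    have "adj chi * (K b T * K b At * K b T) = (adj chi * K b T) * K b At * K b T" by (simp add: massoc d)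
    also have "\<dots> = (P * adj chi) * K b At * K b T" using hT1 by simp
    also have "\<dots> = (A * (P * adj chi)) * K b T" using h1' by simp
    also have "\<dots> = A * P * (adj chi * K b T)" by (simp add: massoc d)
    also have "\<dots> = A * P * (P * adj chi)" using hT1 by simp
    also have "\<dots> = A * (P * P) * adj chi" by (simp add: massoc d)
    also have "\<dots> = A * adj chi" using PP AP by simp
    finally show ?thesis unfolding KT by simp
  qed
  have g2: "chi * A = K b (T * At * T) * chi"
  proof -
    have "(K b T * K b At * K b T) * chi = K b T * K b At * (K b T * chi)" by (simp add: massoc d)
    also have "\<dots> = K b T * K b At * (chi * P)" using hT2 by simp
    also have "\<dots> = K b T * (K b At * (chi * P))" by (simp add: massoc d)
    also have "\<dots> = K b T * (chi * P * A)" using h2 by simp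
    also have "\<dots> = (K b T * chi) * P * A" by (simp add: massoc d)
    also have "\<dots> = (chi * P) * P * A" using hT2 by simp
    also have "\<dots> = chi * (P * P) * A" by (simp add: massoc d)
    also have "\<dots> = chi * A" using PP PA by (simp add: massoc d)
    finally show ?thesis unfolding KT by simp
  qed
  have "A \<in> stloc n a b chi" unfolding stloc_on_def using Ac g1 g2 T At
    by (auto intro!: bexI[of _ "T * At * T"])
  then show ?thesis using AP PA by simp
qed

lemma E_sup:
  assumes X: "chi \<in> carrier_mat (a*b) n" and P: "P \<in> carrier_mat n n" and PH: "adj P = P" and PP: "P * P = P"
    and B: "B \<in> stloc n a b chi" and comm: "P * B = B * P"
  shows "P * B \<in> stloc_on n a b P (chi * P)"
proof -
  from B obtain Bt where Bc: "B \<in> carrier_mat n n" and Bt: "Bt \<in> carrier_mat a a"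
    and h1: "B * adj chi = adj chi * K b Bt" and h2: "chi * B = K b Bt * chi"
    unfolding stloc_on_def by auto
  have d: "dim_row chi = a*b" "dim_col chi = n" "dim_row P = n" "dim_col P = n"
    "dim_row B = n" "dim_col B = n" "dim_row Bt = a" "dim_col Bt = a" using X P Bc Bt by auto
  have aY: "adj (chi * P) = P * adj chi" using adj_mult[OF X P] PH by simp
  have g0: "P * (P * B) * P = P * B"
  proof -
    have "P * (P * B) * P = (P * P) * (B * P)" by (simp add: massoc d)
    also have "\<dots> = P * (P * B)" using PP comm by simp
    also have "\<dots> = P * B" using PP by (simp add: massoc[symmetric] d)
    finally show ?thesis .
  qed
  have g1: "P * B * adj (chi * P) = adj (chi * P) * K b Bt"
  proof -
    have "P * B * (P * adj chi) = P * (B * P) * adj chi" by (simp add: massoc d)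
    also have "\<dots> = P * (P * B) * adj chi" using comm by simp
    also have "\<dots> = (P * P) * (B * adj chi)" by (simp add: massoc d)
    also have "\<dots> = P * (adj chi * K b Bt)" using PP h1 by simp
    also have "\<dots> = (P * adj chi) * K b Bt" by (simp add: massoc d)
    finally show ?thesis unfolding aY .
  qed
  have g2: "chi * P * (P * B) = K b Bt * (chi * P)"
  proof -
    have "chi * P * (P * B) = chi * (P * P) * B" by (simp add: massoc d)
    also have "\<dots> = chi * (B * P)" using PP comm by (simp add: massoc d)
    also have "\<dots> = (chi * B) * P" by (simp add: massoc d)
    also have "\<dots> = K b Bt * (chi * P)" using h2 by (simp add: massoc d)
    finally show ?thesis .
  qed
  show ?thesis unfolding stloc_on_def using g0 g1 g2 Bc P Bt by auto
qed


lemma Q_part: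
  assumes X: "chi \<in> carrier_mat (a*b) n"
    and pc: "\<And>i. i \<in> I \<Longrightarrow> p i \<in> carrier_mat n n"
    and pH: "\<And>i. i \<in> I \<Longrightarrow> adj (p i) = p i"
    and pp: "\<And>i j. i \<in> I \<Longrightarrow> j \<in> I \<Longrightarrow> p i * p j = (if i = j then p i else 0\<^sub>m n n)"
    and T: "\<And>i. i \<in> I \<Longrightarrow> T i \<in> carrier_mat a a"
    and hT1: "\<And>i. i \<in> I \<Longrightarrow> p i * adj chi = adj chi * K b (T i)"
    and hT2: "\<And>i. i \<in> I \<Longrightarrow> chi * p i = K b (T i) * chi"
  shows "\<exists>Q :: 'i \<Rightarrow> complex mat. (\<forall>i\<in>I. is_proj a (Q i)) \<and>
           (\<forall>i\<in>I. \<forall>j\<in>I. i \<noteq> j \<longrightarrow> Q i * Q j = 0\<^sub>m a a) \<and>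
           (\<forall>i\<in>I. mat_range (chi * p i) \<subseteq> mat_range (kron (Q i) (1\<^sub>m b)))"
proof -
  define G where "G i = rs a b (chi * p i)" for i
  have Yc: "chi * p i \<in> carrier_mat (a*b) n" if "i \<in> I" for i using X pc[OF that] by simp
  have Gc: "G i \<in> carrier_mat a (n*b)" if "i \<in> I" for i unfolding G_def using Yc[OF that] by simp
  have dX: "dim_row chi = a*b" "dim_col chi = n" using X by auto
  have dp: "dim_row (p i) = n" "dim_col (p i) = n" if "i \<in> I" for i using pc[OF that] by auto
  have dT: "dim_row (T i) = a" "dim_col (T i) = a" if "i \<in> I" for i using T[OF that] by auto
  have KY: "K b (T i) * (chi * p i) = chi * p i" if i: "i \<in> I" for i
  proof -
    have "K b (T i) * (chi * p i) = (K b (T i) * chi) * p i" using dX dp[OF i] dT[OF i] by (simp add: massoc)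
    also have "\<dots> = (chi * p i) * p i" using hT2[OF i] by simp
    also have "\<dots> = chi * (p i * p i)" using dX dp[OF i] by (simp add: massoc)
    finally show ?thesis using pp[OF i i] by simp
  qed
  have GT: "T i * G i = G i" if i: "i \<in> I" for i
    unfolding G_def using rs_K[OF T[OF i] Yc[OF i]] KY[OF i] by simp
  have adjT: "K b (adj (T i)) * chi = chi * p i" if i: "i \<in> I" for i
  proof -
    have "adj (p i * adj chi) = adj (adj chi * K b (T i))" using hT1[OF i] by simp
    then have "adj (adj chi) * adj (p i) = adj (K b (T i)) * adj (adj chi)"
      using adj_mult[OF pc[OF i] adj_carrier[OF X]] adj_mult[OF adj_carrier[OF X] K_carrier[OF T[OF i]]] by simp
    moreover have "adj (p i) = p i" by (rule pH[OF i])
    ultimately show ?thesis using K_adj[OF T[OF i]] by simp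
  qed
  have TG0: "adj (T i) * G j = 0\<^sub>m a (n*b)" if i: "i \<in> I" and j: "j \<in> I" and ij: "i \<noteq> j" for i j
  proof -
    have aT: "adj (T i) \<in> carrier_mat a a" using T[OF i] by simp
    have "K b (adj (T i)) * (chi * p j) = (K b (adj (T i)) * chi) * p j"
      using dX dp[OF j] dT[OF i] by (simp add: massoc)
    also have "\<dots> = (chi * p i) * p j" using adjT[OF i] by simp
    also have "\<dots> = chi * (p i * p j)" using dX dp[OF i] dp[OF j] by (simp add: massoc)
    also have "\<dots> = 0\<^sub>m (a*b) n" using pp[OF i j] ij dX by simp
    finally have "K b (adj (T i)) * (chi * p j) = 0\<^sub>m (a*b) n" .
    then have "rs a b (K b (adj (T i)) * (chi * p j)) = 0\<^sub>m a (n*b)" by (simp add: rs_zero)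
    then show ?thesis using rs_K[OF aT Yc[OF j]] unfolding G_def by simp
  qed
  have GG0: "adj (G i) * G j = 0\<^sub>m (n*b) (n*b)" if i: "i \<in> I" and j: "j \<in> I" and ij: "i \<noteq> j" for i j
  proof -
    have "adj (G i) = adj (G i) * adj (T i)"
      using adj_mult[OF T[OF i] Gc[OF i]] GT[OF i] by simp
    then have "adj (G i) * G j = (adj (G i) * adj (T i)) * G j" by simp
    also have "\<dots> = adj (G i) * (adj (T i) * G j)"
      using Gc[OF i] Gc[OF j] T[OF i] by (intro massoc) auto
    also have "\<dots> = 0\<^sub>m (n*b) (n*b)" using TG0[OF i j ij] Gc[OF i] by simp
    finally show ?thesis .
  qed
  have "\<forall>i\<in>I. \<exists>Q. Q \<in> carrier_mat a a \<and> adj Q = Q \<and> Q * Q = Q \<and> Q * G i = G i \<and>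
    (\<forall>k. \<forall>Z \<in> carrier_mat a k. adj (G i) * Z = 0\<^sub>m (n*b) k \<longrightarrow> Q * Z = 0\<^sub>m a k)"
    using proj_mat_exists[OF Gc] by blast
  then have "\<exists>Q. \<forall>i\<in>I. Q i \<in> carrier_mat a a \<and> adj (Q i) = Q i \<and> Q i * Q i = Q i \<and> Q i * G i = G i \<and>
    (\<forall>k. \<forall>Z \<in> carrier_mat a k. adj (G i) * Z = 0\<^sub>m (n*b) k \<longrightarrow> Q i * Z = 0\<^sub>m a k)"
    by (rule bchoice)
  then obtain Q where Qall: "\<forall>i\<in>I. Q i \<in> carrier_mat a a \<and> adj (Q i) = Q i \<and> Q i * Q i = Q i \<and> Q i * G i = G i \<and>
    (\<forall>k. \<forall>Z \<in> carrier_mat a k. adj (G i) * Z = 0\<^sub>m (n*b) k \<longrightarrow> Q i * Z = 0\<^sub>m a k)" by blast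
  have Q: "\<And>i. i \<in> I \<Longrightarrow> Q i \<in> carrier_mat a a" and QH: "\<And>i. i \<in> I \<Longrightarrow> adj (Q i) = Q i"
    and QQ: "\<And>i. i \<in> I \<Longrightarrow> Q i * Q i = Q i" and QG: "\<And>i. i \<in> I \<Longrightarrow> Q i * G i = G i"
    and QZ: "\<And>i k Z. i \<in> I \<Longrightarrow> Z \<in> carrier_mat a k \<Longrightarrow> adj (G i) * Z = 0\<^sub>m (n*b) k \<Longrightarrow> Q i * Z = 0\<^sub>m a k"
    using Qall by blast+
  have "Q i * Q j = 0\<^sub>m a a" if i: "i \<in> I" and j: "j \<in> I" and ij: "i \<noteq> j" for i j
  proof -
    have "Q j * G i = 0\<^sub>m a (n*b)" using QZ[OF j Gc[OF i] GG0[OF j i]] ij by simp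
    then have "adj (Q j * G i) = 0\<^sub>m (n*b) a" by simp
    then have "adj (G i) * Q j = 0\<^sub>m (n*b) a" using adj_mult[OF Q[OF j] Gc[OF i]] QH[OF j] by simp
    then show ?thesis using QZ[OF i Q[OF j]] by simp
  qed
  moreover have "mat_range (chi * p i) \<subseteq> mat_range (kron (Q i) (1\<^sub>m b))" if i: "i \<in> I" for i
  proof -
    have "rs a b (K b (Q i) * (chi * p i)) = rs a b (chi * p i)"
      using rs_K[OF Q[OF i] Yc[OF i]] QG[OF i] unfolding G_def by simp
    then have e: "K b (Q i) * (chi * p i) = chi * p i"
      using rs_inj[OF mult_carrier_mat[OF K_carrier[OF Q[OF i]] Yc[OF i]] Yc[OF i]] by simp
    show ?thesis
    proof
      fix w assume "w \<in> mat_range (chi * p i)"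
      then obtain v where v: "v \<in> carrier_vec n" and w: "w = (chi * p i) *\<^sub>v v"
        unfolding mat_range_def using dX dp[OF i] by auto
      have "w = K b (Q i) *\<^sub>v ((chi * p i) *\<^sub>v v)"
        unfolding w by (subst (1) e[symmetric]) (rule assoc_mult_mat_vec[OF K_carrier[OF Q[OF i]] Yc[OF i] v])
      moreover have "(chi * p i) *\<^sub>v v \<in> carrier_vec (dim_col (K b (Q i)))" using Q[OF i] Yc[OF i] v by simp
      ultimately show "w \<in> mat_range (kron (Q i) (1\<^sub>m b))" unfolding mat_range_def by blast
    qed
  qed
  moreover have "is_proj a (Q i)" if "i \<in> I" for i unfolding is_proj_def using Q QH QQ that by auto
  ultimately show ?thesis by blast
qed


lemma smult_one_left[simp]: "1 \<cdot>\<^sub>m (A :: complex mat) = A"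
  by (intro eq_matI) auto

lemma zero_smult_mat: "A \<in> carrier_mat r c \<Longrightarrow> (0::complex) \<cdot>\<^sub>m A = 0\<^sub>m r c"
  by (intro eq_matI) auto

lemma nonzero_entry: assumes "A \<in> carrier_mat n m" "A \<noteq> 0\<^sub>m n m"
  shows "\<exists>x y. x < n \<and> y < m \<and> A $$ (x,y) \<noteq> 0"
  using assms by (auto intro!: eq_matI)

lemma stloc_iff: "A \<in> stloc n a b X \<longleftrightarrow> A \<in> carrier_mat n n \<and>
   (\<exists>At \<in> carrier_mat a a. A * adj X = adj X * K b At \<and> X * A = K b At * X)"
  by (auto simp: stloc_on_def)

theorem mainTheorem12:
  fixes n a b :: nat and chi :: "complex mat" and I :: "'i set" and p :: "'i \<Rightarrow> complex mat"
  assumes "splitting n a b chi"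
    and "atomic_projectors n (centre (stloc n a b chi)) I p"
  shows "(msum n n I p = 1\<^sub>m n \<and> (\<forall>i\<in>I. \<forall>j\<in>I. i \<noteq> j \<longrightarrow> p i * p j = 0\<^sub>m n n))
    \<and> (chi = msum (a*b) n I (\<lambda>i. chi * p i) \<and> chi = msum (a*b) n I (\<lambda>i. (chi * p i) * p i))
    \<and> (\<forall>i\<in>I. splitting_on n a b (p i) ((chi * p i) * p i))
    \<and> (\<forall>i\<in>I. stloc_on n a b (p i) ((chi * p i) * p i) = {p i * A | A. A \<in> stloc n a b chi}
              \<and> is_factor (p i) (stloc_on n a b (p i) ((chi * p i) * p i)))
    \<and> (\<exists>Q :: 'i \<Rightarrow> complex mat. (\<forall>i\<in>I. is_proj a (Q i)) \<and>
           (\<forall>i\<in>I. \<forall>j\<in>I. i \<noteq> j \<longrightarrow> Q i * Q j = 0\<^sub>m a a) \<and>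
           (\<forall>i\<in>I. mat_range (chi * p i) \<subseteq> mat_range (kron (Q i) (1\<^sub>m b))))"
proof -
  let ?S = "stloc n a b chi"
  let ?X = "adj chi"
  have X: "chi \<in> carrier_mat (a*b) n" and XX: "adj chi * chi = 1\<^sub>m n"
    using assms(1) by (auto simp: splitting_on_def)
  have Xa: "?X \<in> carrier_mat n (a*b)" using X by simp
  have fin: "finite I" and pc: "\<And>i. i \<in> I \<Longrightarrow> p i \<in> carrier_mat n n"
    and p0: "\<And>i. i \<in> I \<Longrightarrow> p i \<noteq> 0\<^sub>m n n" and pH: "\<And>i. i \<in> I \<Longrightarrow> adj (p i) = p i"
    and pp: "\<And>i j. i \<in> I \<Longrightarrow> j \<in> I \<Longrightarrow> p i * p j = (if i = j then p i else 0\<^sub>m n n)"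
    and Z: "centre ?S = {msum n n I (\<lambda>i. c i \<cdot>\<^sub>m p i) | c. True}"
    using assms(2) unfolding atomic_projectors_def by auto
  have ppi: "\<And>i. i \<in> I \<Longrightarrow> p i * p i = p i" using pp by simp
  have pmsum: "p i * msum n n I (\<lambda>j. c j \<cdot>\<^sub>m p j) = c i \<cdot>\<^sub>m p i" if i: "i \<in> I" for i c
  proof -
    have "p i * msum n n I (\<lambda>j. c j \<cdot>\<^sub>m p j) = msum n n I (\<lambda>j. p i * (c j \<cdot>\<^sub>m p j))"
      using pc i by (intro msum_mult_left) auto
    also have "\<dots> = msum n n I (\<lambda>j. if j = i then c i \<cdot>\<^sub>m p i else 0\<^sub>m n n)"
      using pc pp i by (intro msum_cong) (auto simp: mult_smult_distrib[of _ n n _ n])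
    also have "\<dots> = c i \<cdot>\<^sub>m p i"
      using fin i pc by (subst msum_single[where i = i]) auto
    finally show ?thesis .
  qed
  have pZ: "p i \<in> centre ?S" if i: "i \<in> I" for i
  proof -
    have "msum n n I (\<lambda>j. (if j = i then 1 else 0) \<cdot>\<^sub>m p j) = p i"
      using fin i pc by (subst msum_single[where i = i]) (auto simp: zero_smult_mat[OF pc])
    then show ?thesis unfolding Z by (auto intro!: exI[of _ "\<lambda>j. if j = i then 1 else 0"])
  qed
  have pS: "p i \<in> ?S" and pcomm: "\<And>B. B \<in> ?S \<Longrightarrow> p i * B = B * p i" if "i \<in> I" for i
    using pZ[OF that] unfolding centre_def by auto
  have cS: "c \<cdot>\<^sub>m 1\<^sub>m n \<in> ?S" for c
  proof -
    have Kc: "K b (c \<cdot>\<^sub>m 1\<^sub>m a) = c \<cdot>\<^sub>m 1\<^sub>m (a*b)"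
      using K_smult[where A="1\<^sub>m a" and a=a and b=b and c=c] K_one[where a=a and b=b] by simp
    have "(c \<cdot>\<^sub>m 1\<^sub>m n) * ?X = c \<cdot>\<^sub>m (1\<^sub>m n * ?X)"
      using Xa by (intro mult_smult_assoc_mat) auto
    also have "\<dots> = c \<cdot>\<^sub>m (?X * 1\<^sub>m (a*b))" by (simp add: left_mult_one_mat[OF Xa] right_mult_one_mat[OF Xa])
    also have "\<dots> = ?X * (c \<cdot>\<^sub>m 1\<^sub>m (a*b))"
      using Xa by (intro mult_smult_distrib[symmetric]) auto
    finally have 1: "(c \<cdot>\<^sub>m 1\<^sub>m n) * ?X = ?X * K b (c \<cdot>\<^sub>m 1\<^sub>m a)" unfolding Kc .
    have "chi * (c \<cdot>\<^sub>m 1\<^sub>m n) = c \<cdot>\<^sub>m (chi * 1\<^sub>m n)"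
      using X by (intro mult_smult_distrib) auto
    also have "\<dots> = c \<cdot>\<^sub>m (1\<^sub>m (a*b) * chi)" by (simp add: left_mult_one_mat[OF X] right_mult_one_mat[OF X])
    also have "\<dots> = (c \<cdot>\<^sub>m 1\<^sub>m (a*b)) * chi"
      using X by (intro mult_smult_assoc_mat[symmetric]) auto
    finally have 2: "chi * (c \<cdot>\<^sub>m 1\<^sub>m n) = K b (c \<cdot>\<^sub>m 1\<^sub>m a) * chi" unfolding Kc .
    from 1 2 show ?thesis unfolding stloc_iff by (auto intro!: bexI[of _ "c \<cdot>\<^sub>m 1\<^sub>m a"])
  qed
  have oneZ: "1\<^sub>m n \<in> centre ?S"
    using cS[of 1] unfolding centre_def by (auto simp: stloc_iff)
  then obtain c where c: "1\<^sub>m n = msum n n I (\<lambda>i. c i \<cdot>\<^sub>m p i)" unfolding Z by auto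
  have ci: "c i = 1" if i: "i \<in> I" for i
  proof -
    have "p i = p i * 1\<^sub>m n" using pc[OF i] by simp
    also have "\<dots> = c i \<cdot>\<^sub>m p i" by (subst c) (rule pmsum[OF i])
    finally have e: "p i = c i \<cdot>\<^sub>m p i" .
    obtain x y where xy: "x < n" "y < n" "p i $$ (x,y) \<noteq> 0" using nonzero_entry[OF pc[OF i] p0[OF i]] by blast
    have "p i $$ (x,y) = c i * p i $$ (x,y)" using xy pc[OF i] by (subst e) simp
    then show ?thesis using xy(3) by simp
  qed
  have P1: "msum n n I p = 1\<^sub>m n"
    unfolding c using ci by (intro msum_cong) simp
  have P1': "\<forall>i\<in>I. \<forall>j\<in>I. i \<noteq> j \<longrightarrow> p i * p j = 0\<^sub>m n n" using pp by auto
  have Ypp: "chi * p i * p i = chi * p i" if i: "i \<in> I" for i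
    using assoc_mult_mat[OF X pc[OF i] pc[OF i]] ppi[OF i] by simp
  have P2a: "chi = msum (a*b) n I (\<lambda>i. chi * p i)"
  proof -
    have "chi = chi * msum n n I p" using X P1 by simp
    also have "\<dots> = msum (a*b) n I (\<lambda>i. chi * p i)" using X pc by (rule msum_mult_left)
    finally show ?thesis .
  qed
  have P2b: "chi = msum (a*b) n I (\<lambda>i. (chi * p i) * p i)"
    using P2a Ypp by (simp cong: msum_cong)
  have adjY: "adj (chi * p i) = p i * ?X" if i: "i \<in> I" for i
    using adj_mult[OF X pc[OF i]] pH[OF i] by simp
  have P3: "splitting_on n a b (p i) ((chi * p i) * p i)" if i: "i \<in> I" for i
  proof -
    have "adj (chi * p i) * (chi * p i) = p i * (?X * chi) * p i"
    proof -
      have Yc: "chi * p i \<in> carrier_mat (a*b) n" using X pc[OF i] by simp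
      have XXc: "?X * chi \<in> carrier_mat n n" using mult_carrier_mat[OF Xa X] .
      have "p i * ?X * (chi * p i) = p i * (?X * (chi * p i))" by (rule assoc_mult_mat[OF pc[OF i] Xa Yc])
      also have "?X * (chi * p i) = (?X * chi) * p i" by (rule assoc_mult_mat[OF Xa X pc[OF i], symmetric])
      also have "p i * ((?X * chi) * p i) = p i * (?X * chi) * p i" by (rule assoc_mult_mat[OF pc[OF i] XXc pc[OF i], symmetric])
      finally show ?thesis unfolding adjY[OF i] .
    qed
    also have "\<dots> = p i" using XX ppi[OF i] pc[OF i] by simp
    finally show ?thesis unfolding Ypp[OF i] splitting_on_def is_proj_def
      using pc[OF i] pH[OF i] ppi[OF i] X Ypp[OF i] by auto
  qed
  have "\<forall>i\<in>I. \<exists>T. T \<in> carrier_mat a a \<and> p i * ?X = ?X * K b T \<and> chi * p i = K b T * chi"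
    using pS unfolding stloc_iff by blast
  then have "\<exists>T. \<forall>i\<in>I. T i \<in> carrier_mat a a \<and> p i * ?X = ?X * K b (T i) \<and> chi * p i = K b (T i) * chi"
    by (rule bchoice)
  then obtain T where Tall: "\<forall>i\<in>I. T i \<in> carrier_mat a a \<and> p i * ?X = ?X * K b (T i) \<and> chi * p i = K b (T i) * chi"
    by blast
  have T: "\<And>i. i \<in> I \<Longrightarrow> T i \<in> carrier_mat a a" and hT1: "\<And>i. i \<in> I \<Longrightarrow> p i * ?X = ?X * K b (T i)"
    and hT2: "\<And>i. i \<in> I \<Longrightarrow> chi * p i = K b (T i) * chi" using Tall by blast+
  have P4: "stloc_on n a b (p i) ((chi * p i) * p i) = {p i * A | A. A \<in> ?S}
              \<and> is_factor (p i) (stloc_on n a b (p i) ((chi * p i) * p i))" if i: "i \<in> I" for i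
  proof -
    define E where "E = stloc_on n a b (p i) (chi * p i)"
    have Esub: "A \<in> ?S \<and> p i * A = A \<and> A * p i = A" if "A \<in> E" for A
      using E_sub[OF X pc[OF i] pH[OF i] ppi[OF i] T[OF i] hT1[OF i] hT2[OF i]] that unfolding E_def by blast
    have Esup: "p i * B \<in> E" if "B \<in> ?S" for B
      unfolding E_def using E_sup[OF X pc[OF i] pH[OF i] ppi[OF i] that pcomm[OF i that]] .
    have set: "E = {p i * A | A. A \<in> ?S}"
    proof
      show "E \<subseteq> {p i * A | A. A \<in> ?S}"
      proof
        fix A assume "A \<in> E"
        then have "A \<in> ?S" "p i * A = A" using Esub by auto
        then show "A \<in> {p i * A | A. A \<in> ?S}" by (auto intro!: exI[of _ A])
      qed
      show "{p i * A | A. A \<in> ?S} \<subseteq> E" using Esup by blast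
    qed
    have cE: "centre E = {c \<cdot>\<^sub>m p i | c. True}"
    proof
      show "centre E \<subseteq> {c \<cdot>\<^sub>m p i | c. True}"
      proof
        fix Z assume "Z \<in> centre E"
        then have ZE: "Z \<in> E" and Zc: "\<And>B. B \<in> E \<Longrightarrow> Z * B = B * Z" unfolding centre_def by auto
        from Esub[OF ZE] have ZS: "Z \<in> ?S" and pZ: "p i * Z = Z" and Zp: "Z * p i = Z" by auto
        have Zcar: "Z \<in> carrier_mat n n" using ZS stloc_iff by blast
        have "Z * B = B * Z" if B: "B \<in> ?S" for B
        proof -
          have Bc: "B \<in> carrier_mat n n" using B stloc_iff by blast
          have "Z * B = (Z * p i) * B" using Zp by simp
          also have "\<dots> = Z * (p i * B)" using Zcar pc[OF i] Bc by (intro massoc) auto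
          also have "\<dots> = (p i * B) * Z" using Zc[OF Esup[OF B]] .
          also have "\<dots> = (B * p i) * Z" using pcomm[OF i B] by simp
          also have "\<dots> = B * (p i * Z)" using Zcar pc[OF i] Bc by (intro massoc) auto
          finally show ?thesis using pZ by simp
        qed
        then have "Z \<in> centre ?S" using ZS unfolding centre_def by auto
        then obtain c where "Z = msum n n I (\<lambda>i. c i \<cdot>\<^sub>m p i)" unfolding Z by auto
        then have "p i * Z = c i \<cdot>\<^sub>m p i" using pmsum[OF i] by simp
        then show "Z \<in> {c \<cdot>\<^sub>m p i | c. True}" using pZ by auto
      qed
      show "{c \<cdot>\<^sub>m p i | c. True} \<subseteq> centre E"
      proof
        fix W assume "W \<in> {c \<cdot>\<^sub>m p i | c. True}"
        then obtain c where W: "W = c \<cdot>\<^sub>m p i" by auto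
        have "p i * (c \<cdot>\<^sub>m 1\<^sub>m n) = c \<cdot>\<^sub>m (p i * 1\<^sub>m n)" using pc[OF i] by (intro mult_smult_distrib) auto
        then have e: "p i * (c \<cdot>\<^sub>m 1\<^sub>m n) = W" using W pc[OF i] by simp
        have WE: "W \<in> E" using Esup[OF cS[of c]] unfolding e .
        have "W * B = B * W" if B: "B \<in> E" for B
        proof -
          from Esub[OF B] have BS: "B \<in> ?S" and pB: "p i * B = B" and Bp: "B * p i = B" by auto
          have Bc: "B \<in> carrier_mat n n" using BS stloc_iff by blast
          have "W * B = c \<cdot>\<^sub>m (p i * B)" unfolding W using pc[OF i] Bc by (intro mult_smult_assoc_mat) auto
          also have "\<dots> = c \<cdot>\<^sub>m (B * p i)" using pB Bp by simp
          also have "\<dots> = B * W" unfolding W using pc[OF i] Bc by (intro mult_smult_distrib[symmetric]) auto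
          finally show ?thesis .
        qed
        then show "W \<in> centre E" using WE unfolding centre_def by auto
      qed
    qed
    show ?thesis unfolding Ypp[OF i] E_def[symmetric] is_factor_def using set cE by simp
  qed
  have P5: "\<exists>Q :: 'i \<Rightarrow> complex mat. (\<forall>i\<in>I. is_proj a (Q i)) \<and>
           (\<forall>i\<in>I. \<forall>j\<in>I. i \<noteq> j \<longrightarrow> Q i * Q j = 0\<^sub>m a a) \<and>
           (\<forall>i\<in>I. mat_range (chi * p i) \<subseteq> mat_range (kron (Q i) (1\<^sub>m b)))"
    by (rule Q_part[OF X pc pH pp T hT1 hT2])
  show ?thesis using P1 P1' P2a P2b P3 P4 P5 by blast
qed

end
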